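(* Let $P\subseteq\mathbb{R}^n$ be an $n$-dimensional lattice simplex, with vertices $v_0,\dots,v_n$, and let $a_i$ be the lattice distance of $v_i$ from the facet of $P$ not containing $v_i$. (1) If $\mu(P)>\frac{n+1}{2}$, or if $\mu(P)=\frac{n+1}{2}$ and $a_i\neq2$ for some $i$, then $P$ is a lattice pyramid. (2) If $\mu(P)\ge\frac{n+1}{2}$ and $P$ is not unimodularly equivalent to $2\Delta_n$, then $P$ has lattice width one.
   Context: Lattice distance from a facet $F=\{\langle c,x\rangle=b\}$ (with $c\in(\mathbb{Z}^n)^*$ primitive inner normal) is $d_F(y)=\langle c,y\rangle-b$; $d_P(y):=\min_F d_F(y)$ over facets, $P^{(s)}:=\{y:d_P(y)\ge s\}$, $\mu(P):=(\sup\{s>0:P^{(s)}\neq\emptyset\})^{-1}$. A lattice simplex is a lattice pyramid if some vertex has lattice distance $1$ from the opposite facet (i.e. $P$ is unimodularly equivalent to $\mathrm{conv}(Q\times\{0\},(0,\dots,0,1))$ for a lattice polytope $Q\subseteq\mathbb{R}^{n-1}$). $\Delta_n=\mathrm{conv}(0,e_1,\dots,e_n)$. The lattice width of $P$ is the minimum over nonzero $u\in(\mathbb{Z}^n)^*$ of $\max_{x\in P}\langle u,x\rangle-\min_{x\in P}\langle u,x\rangle$. Unimodular equivalence is via an affine lattice automorphism of $\mathbb{Z}^n$. *)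

theory Defs
  imports "HOL-Analysis.Analysis"
begin

text \<open>Lattice points of Z^n inside R^n (index type 'n, n = CARD('n)).\<close>
definition lattice_point :: "real^'n \<Rightarrow> bool" where
  "lattice_point x \<longleftrightarrow> (\<forall>i. x $ i \<in> \<int>)"

definition primitive_vec :: "real^'n \<Rightarrow> bool" where
  "primitive_vec c \<longleftrightarrow> lattice_point c \<and> c \<noteq> 0 \<and>
     (\<forall>k::int. \<forall>c'. lattice_point c' \<and> c = of_int k *\<^sub>R c' \<longrightarrow> \<bar>k\<bar> = 1)"

definition prim_inner_normal :: "(real^'n) set \<Rightarrow> (real^'n) set \<Rightarrow> real^'n \<Rightarrow> real \<Rightarrow> bool" where
  "prim_inner_normal P F c b \<longleftrightarrow> primitive_vec c \<and>
     (\<forall>x\<in>F. c \<bullet> x = b) \<and> (\<forall>x\<in>P. c \<bullet> x \<ge> b)"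

definition facet_dist :: "(real^'n) set \<Rightarrow> (real^'n) set \<Rightarrow> real^'n \<Rightarrow> real" where
  "facet_dist P F y = (THE d. \<exists>c b. prim_inner_normal P F c b \<and> d = c \<bullet> y - b)"

definition poly_dist :: "(real^'n) set \<Rightarrow> real^'n \<Rightarrow> real" where
  "poly_dist P y = Min {facet_dist P F y | F. F facet_of P}"

definition inner_level :: "(real^'n) set \<Rightarrow> real \<Rightarrow> (real^'n) set" where
  "inner_level P s = {y. poly_dist P y \<ge> s}"

definition mu :: "(real^'n) set \<Rightarrow> real" where
  "mu P = inverse (Sup {s. s > 0 \<and> inner_level P s \<noteq> {}})"

definition lattice_pyramid :: "(real^'n) set \<Rightarrow> bool" where
  "lattice_pyramid P \<longleftrightarrow> (\<exists>F x. F facet_of P \<and> x extreme_point_of P \<and> x \<notin> F \<and> facet_dist P F x = 1)"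

definition unimodular_map :: "(real^'n \<Rightarrow> real^'n) \<Rightarrow> bool" where
  "unimodular_map f \<longleftrightarrow> (\<exists>(A::real^'n^'n) t. (\<forall>i j. A $ i $ j \<in> \<int>) \<and> \<bar>det A\<bar> = 1 \<and>
      lattice_point t \<and> f = (\<lambda>x. A *v x + t))"

definition unimod_equiv :: "(real^'n) set \<Rightarrow> (real^'n) set \<Rightarrow> bool" where
  "unimod_equiv P Q \<longleftrightarrow> (\<exists>f. unimodular_map f \<and> f ` P = Q)"

definition std_simplex :: "(real^'n) set" where
  "std_simplex = convex hull (insert 0 {axis i 1 | i. True})"

definition lattice_width :: "(real^'n) set \<Rightarrow> real" where
  "lattice_width P = (INF u\<in>{u. lattice_point u \<and> u \<noteq> 0}.
      (SUP x\<in>P. u \<bullet> x) - (INF x\<in>P. u \<bullet> x))"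

end

theory Submission
  imports Defs
begin


lemma lattice_inner_Ints:
  assumes "lattice_point (a::real^'n)" "lattice_point b" shows "a \<bullet> b \<in> \<int>"
  using assms unfolding lattice_point_def inner_vec_def
  by (auto intro!: Ints_sum Ints_mult simp: inner_real_def)

lemma det_Ints:
  fixes A :: "real^'n^'n"
  assumes "\<forall>i j. A$i$j \<in> \<int>" shows "det A \<in> \<int>"
  unfolding det_def using assms
  by (auto intro!: Ints_sum Ints_mult Ints_prod)

lemma lattice_point_add: "lattice_point a \<Longrightarrow> lattice_point b \<Longrightarrow> lattice_point (a + b)"
  by (auto simp: lattice_point_def)
lemma lattice_point_diff: "lattice_point a \<Longrightarrow> lattice_point b \<Longrightarrow> lattice_point (a - b)"
  by (auto simp: lattice_point_def)
lemma lattice_point_scale: "k \<in> \<int> \<Longrightarrow> lattice_point a \<Longrightarrow> lattice_point (k *\<^sub>R a)"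
  by (auto simp: lattice_point_def)
lemma lattice_point_0: "lattice_point 0"
  by (auto simp: lattice_point_def)



lemma prim_exists:
  fixes C :: "real^'n"
  assumes C: "lattice_point C" "C \<noteq> 0"
  shows "\<exists>k::nat. k > 0 \<and> (\<exists>c. primitive_vec c \<and> C = real k *\<^sub>R c)"
proof -
  obtain r where r: "C$r \<noteq> 0" using C(2) by (metis vec_eq_iff zero_index)
  define K where "K = {k::nat. k > 0 \<and> (\<exists>c. lattice_point c \<and> C = real k *\<^sub>R c)}"
  have bnd: "k \<le> nat \<lceil>\<bar>C$r\<bar>\<rceil>" if "k \<in> K" for k
  proof -
    from that obtain c where c: "lattice_point c" "C = real k *\<^sub>R c" "k > 0" by (auto simp: K_def)
    have "c$r \<in> \<int>" using c(1) by (auto simp: lattice_point_def)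
    moreover have "c$r \<noteq> 0" using r c(2) by auto
    ultimately have "\<bar>c$r\<bar> \<ge> 1"
      by (metis Ints_cases abs_ge_zero of_int_1_le_iff of_int_abs zero_less_abs_iff of_int_0_eq_iff zero_less_one_class.zero_le_one int_one_le_iff_zero_less)
    have "C$r = real k * c$r" using c(2) by simp
    hence "\<bar>C$r\<bar> = real k * \<bar>c$r\<bar>" by (simp add: abs_mult)
    hence "\<bar>C$r\<bar> \<ge> real k" using \<open>\<bar>c$r\<bar> \<ge> 1\<close>
      by (metis mult.right_neutral mult_left_mono of_nat_0_le_iff)
    thus ?thesis by linarith
  qed
  have fin: "finite K" by (rule finite_subset[of _ "{..nat \<lceil>\<bar>C$r\<bar>\<rceil>}"]) (use bnd in auto)
  have one: "1 \<in> K" using C(1) by (auto simp: K_def intro!: exI[of _ C])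
  define k where "k = Max K"
  have kK: "k \<in> K" unfolding k_def using fin one by (intro Max_in) auto
  then obtain c where c: "lattice_point c" "C = real k *\<^sub>R c" "k > 0" by (auto simp: K_def)
  have "primitive_vec c"
    unfolding primitive_vec_def
  proof (intro conjI allI impI)
    show "lattice_point c" by fact
    show "c \<noteq> 0" using c C(2) by auto
    fix k2 :: int and c' assume h: "lattice_point c' \<and> c = of_int k2 *\<^sub>R c'"
    have "k2 \<noteq> 0" using h \<open>c \<noteq> 0\<close> by auto
    have "C = real (k * nat \<bar>k2\<bar>) *\<^sub>R (of_int (sgn k2) *\<^sub>R c')"
      using h c(2) \<open>k2 \<noteq> 0\<close> by (auto simp: abs_if sgn_if)
    moreover have "lattice_point (of_int (sgn k2) *\<^sub>R c')"
      using h by (intro lattice_point_scale) auto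
    ultimately have "k * nat \<bar>k2\<bar> \<in> K" using c(3) \<open>k2 \<noteq> 0\<close> by (auto simp: K_def)
    hence "k * nat \<bar>k2\<bar> \<le> k" unfolding k_def using Max_ge[OF fin] by blast
    hence "nat \<bar>k2\<bar> \<le> 1" using c(3) by (metis mult_le_cancel1 nat_mult_1_right)
    thus "\<bar>k2\<bar> = 1" using \<open>k2 \<noteq> 0\<close> by linarith
  qed
  thus ?thesis using c by blast
qed

lemma prim_unique:
  fixes c c' :: "real^'n"
  assumes "primitive_vec c" "primitive_vec c'" "p > 0" "q > 0" "of_int p *\<^sub>R c = of_int q *\<^sub>R c'"
  shows "c = c'"
proof -
  obtain x y where xy: "x * p + y * q = gcd p q" using bezout_int by blast
  define g where "g = gcd p q"
  have g0: "g > 0" using assms(3) by (simp add: g_def)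
  obtain p' where p': "p = g * p'" unfolding g_def by (meson gcd_dvd1 dvd_def)
  obtain q' where q': "q = g * q'" unfolding g_def by (meson gcd_dvd2 dvd_def)
  define w where "w = of_int x *\<^sub>R c' + of_int y *\<^sub>R c"
  have xyr: "real_of_int x * real_of_int p + real_of_int y * real_of_int q = real_of_int g"
    using xy unfolding g_def by (metis of_int_add of_int_mult)
  have lw: "lattice_point w" using assms(1,2) unfolding w_def primitive_vec_def
    by (intro lattice_point_add lattice_point_scale) auto
  have e: "of_int p *\<^sub>R c = of_int q *\<^sub>R c'" by fact
  have e1: "of_int (x*q) *\<^sub>R c' = of_int (x*p) *\<^sub>R c" using e
    by (metis (no_types, lifting) mult.commute of_int_mult scaleR_scaleR)
  have e2: "of_int (y*p) *\<^sub>R c = of_int (y*q) *\<^sub>R c'" using e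
    by (metis (no_types, lifting) mult.commute of_int_mult scaleR_scaleR)
  have "of_int q *\<^sub>R w = of_int (x*q) *\<^sub>R c' + of_int (y*q) *\<^sub>R c"
    by (simp add: w_def algebra_simps)
  also have "\<dots> = of_int (x*p) *\<^sub>R c + of_int (y*q) *\<^sub>R c" using e1 by simp
  also have "\<dots> = (real_of_int x * real_of_int p + real_of_int y * real_of_int q) *\<^sub>R c"
    by (simp only: scaleR_add_left of_int_mult)
  finally have "of_int q *\<^sub>R w = of_int g *\<^sub>R c" using xyr by simp
  hence "of_int g *\<^sub>R (of_int q' *\<^sub>R w) = of_int g *\<^sub>R c" using q' by simp
  hence cq: "c = of_int q' *\<^sub>R w" using g0 by (subst (asm) scaleR_cancel_left) auto
  have "of_int p *\<^sub>R w = of_int (x*p) *\<^sub>R c' + of_int (y*p) *\<^sub>R c"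
    by (simp add: w_def algebra_simps)
  also have "\<dots> = of_int (x*p) *\<^sub>R c' + of_int (y*q) *\<^sub>R c'" using e2 by simp
  also have "\<dots> = (real_of_int x * real_of_int p + real_of_int y * real_of_int q) *\<^sub>R c'"
    by (simp only: scaleR_add_left of_int_mult)
  finally have "of_int p *\<^sub>R w = of_int g *\<^sub>R c'" using xyr by simp
  hence "of_int g *\<^sub>R (of_int p' *\<^sub>R w) = of_int g *\<^sub>R c'" using p' by simp
  hence cp: "c' = of_int p' *\<^sub>R w" using g0 by (subst (asm) scaleR_cancel_left) auto
  have "\<bar>q'\<bar> = 1" using assms(1) cq lw unfolding primitive_vec_def by blast
  moreover have "\<bar>p'\<bar> = 1" using assms(2) cp lw unfolding primitive_vec_def by blast
  moreover have "q' > 0" "p' > 0" using q' p' g0 assms(3,4) by (auto simp: zero_less_mult_iff)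
  ultimately show ?thesis using cq cp by simp
qed



lemma lattice_point_sum: "\<forall>i\<in>S. lattice_point (f i) \<Longrightarrow> lattice_point (sum f S)"
  unfolding lattice_point_def by (auto simp: sum_component intro!: Ints_sum)

locale lsx =
  fixes v :: "nat \<Rightarrow> real^'n"
  assumes lat: "\<And>i. i \<le> CARD('n) \<Longrightarrow> lattice_point (v i)"
    and inj: "inj_on v {..CARD('n)}"
    and indep: "\<not> affine_dependent (v ` {..CARD('n)})"
begin


lemma K:
  assumes "\<And>j. j \<le> CARD('n) \<Longrightarrow> d \<bullet> v j = e" shows "d = 0"
proof -
  have "card (v ` {..CARD('n)}) = Suc CARD('n)" using inj by (simp add: card_image)
  hence "affine hull (v ` {..CARD('n)}) = UNIV"
    using indep by (intro affine_independent_span_eq) auto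
  moreover have "affine hull (v ` {..CARD('n)}) \<subseteq> {x. d \<bullet> x = e}"
    using assms by (intro hull_minimal) (auto simp: affine_hyperplane)
  ultimately have "\<And>x. d \<bullet> x = e" by auto
  from this[of 0] this[of d] show ?thesis by simp
qed

lemma normal_exists:
  assumes i: "i \<le> CARD('n)"
  shows "\<exists>C B. lattice_point C \<and> (\<forall>j\<le>CARD('n). j \<noteq> i \<longrightarrow> C \<bullet> v j = B) \<and> C \<bullet> v i > B"
proof -
  obtain s :: "nat \<Rightarrow> 'n" where s: "bij_betw s {1..CARD('n)} UNIV"
    using ex_bij_betw_nat_finite_1[of "UNIV :: 'n set"] by auto
  define \<tau> where "\<tau> = inv_into {1..CARD('n)} s"
  have \<tau>1: "\<tau> k \<in> {1..CARD('n)}" for k unfolding \<tau>_def using s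
    by (metis bij_betw_def inv_into_into iso_tuple_UNIV_I)
  have \<tau>2: "s (\<tau> k) = k" for k unfolding \<tau>_def using s
    by (meson bij_betw_inv_into_right iso_tuple_UNIV_I)
  have \<tau>3: "\<tau> (s j) = j" if "j \<in> {1..CARD('n)}" for j unfolding \<tau>_def using s that
    by (meson bij_betw_inv_into_left)
  define R :: "real^'n^'n" where "R = (\<chi> k r. (v (\<tau> k) - v 0) $ r)"
  have Rv: "(R *v c) $ k = (v (\<tau> k) - v 0) \<bullet> c" for c k
    unfolding R_def matrix_vector_mul_component
    by (metis (no_types) vec_lambda_beta vec_lambda_eta)
  have Rint: "\<forall>a b. R$a$b \<in> \<int>"
    using lat \<tau>1 unfolding R_def lattice_point_def by auto
  have "inj ((*v) R)"
  proof (rule injI)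
    fix x y assume "R *v x = R *v y"
    hence h: "(v (\<tau> k) - v 0) \<bullet> (x - y) = 0" for k
      using Rv[of "x - y" k] by (simp add: matrix_vector_mult_diff_distrib)
    have "(x - y) \<bullet> v j = (x - y) \<bullet> v 0" if "j \<le> CARD('n)" for j
    proof (cases "j = 0")
      case False
      hence "j \<in> {1..CARD('n)}" using that by auto
      with h[of "s j"] \<tau>3 show ?thesis by (simp add: inner_diff inner_commute)
    qed simp
    hence "x - y = 0" by (rule K)
    thus "x = y" by simp
  qed
  hence detR: "det R \<noteq> 0"
    using det_nz_iff_inj[of "(*v) R"] by (simp add: matrix_vector_mul_linear)
  define t :: "real^'n" where "t = (\<chi> k. if i = 0 then -1 else if \<tau> k = i then 1 else 0)"
  define c :: "real^'n" where "c = (\<chi> k. det (\<chi> a b. if b = k then t$a else R$a$b) / det R)"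
  have Rc: "R *v c = t" using cramer[OF detR] c_def by blast
  define D where "D = det R"
  have DI: "D \<in> \<int>" unfolding D_def by (rule det_Ints[OF Rint])
  define C where "C = (D * D) *\<^sub>R c"
  have latC: "lattice_point C"
  proof -
    have "(D *\<^sub>R c) $ k \<in> \<int>" for k
      unfolding c_def D_def using detR Rint
      by (auto intro!: det_Ints simp: t_def)
    hence "lattice_point (D *\<^sub>R c)" by (simp add: lattice_point_def)
    thus ?thesis unfolding C_def using DI by (metis lattice_point_scale scaleR_scaleR)
  qed
  have D2: "D * D > 0" using detR D_def not_real_square_gt_zero by blast
  have Cv: "C \<bullet> v j - C \<bullet> v 0 = (D * D) * (if i = 0 then -1 else if j = i then 1 else 0)"
    if "j \<in> {1..CARD('n)}" for j
  proof -
    have "(R *v c) $ (s j) = t $ (s j)" using Rc by simp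
    hence "(v j - v 0) \<bullet> c = (if i = 0 then -1 else if j = i then 1 else 0)"
      using Rv \<tau>3[OF that] by (simp add: t_def)
    thus ?thesis unfolding C_def by (simp add: inner_diff inner_commute algebra_simps)
  qed
  show ?thesis
  proof (cases "i = 0")
    case True
    show ?thesis
    proof (intro exI conjI allI impI)
      show "lattice_point C" by fact
      fix j assume "j \<le> CARD('n)" "j \<noteq> i"
      hence "j \<in> {1..CARD('n)}" using True by auto
      from Cv[OF this] True show "C \<bullet> v j = C \<bullet> v 0 - D * D" by simp
    next
      show "C \<bullet> v i > C \<bullet> v 0 - D * D" using True D2 by simp
    qed
  next
    case False
    hence iN: "i \<in> {1..CARD('n)}" using i by auto
    show ?thesis
    proof (intro exI conjI allI impI)
      show "lattice_point C" by fact
      fix j assume "j \<le> CARD('n)" "j \<noteq> i"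
      show "C \<bullet> v j = C \<bullet> v 0"
      proof (cases "j = 0")
        case False
        hence "j \<in> {1..CARD('n)}" using \<open>j \<le> CARD('n)\<close> by auto
        from Cv[OF this] \<open>j \<noteq> i\<close> \<open>i \<noteq> 0\<close> show ?thesis by simp
      qed simp
    next
      show "C \<bullet> v i > C \<bullet> v 0" using Cv[OF iN] False D2 by simp
    qed
  qed
qed

lemma normal_prim:
  assumes i: "i \<le> CARD('n)"
  shows "\<exists>c b. primitive_vec c \<and> (\<forall>j\<le>CARD('n). j \<noteq> i \<longrightarrow> c \<bullet> v j = b) \<and> c \<bullet> v i > b"
proof -
  obtain C B where CB: "lattice_point C" "\<forall>j\<le>CARD('n). j \<noteq> i \<longrightarrow> C \<bullet> v j = B" "C \<bullet> v i > B"
    using normal_exists[OF i] by blast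
  define j0 :: nat where "j0 = (if i = 0 then 1 else 0)"
  have j0: "j0 \<le> CARD('n)" "j0 \<noteq> i" unfolding j0_def by auto
  have "C \<noteq> 0" using CB j0 by fastforce
  then obtain k c where kc: "k > 0" "primitive_vec c" "C = real k *\<^sub>R c"
    using prim_exists[OF CB(1)] by blast
  show ?thesis
  proof (intro exI conjI allI impI)
    show "primitive_vec c" by fact
    fix j assume "j \<le> CARD('n)" "j \<noteq> i"
    thus "c \<bullet> v j = B / real k" using CB(2) kc by (auto simp: field_simps)
  next
    show "c \<bullet> v i > B / real k" using CB(3) kc by (auto simp: field_simps)
  qed
qed

definition "nrm i = (SOME cb. primitive_vec (fst cb) \<and> (\<forall>j\<le>CARD('n). j \<noteq> i \<longrightarrow> fst cb \<bullet> v j = snd cb)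
   \<and> fst cb \<bullet> v i > snd cb)"
definition "cc i = fst (nrm i)"
definition "bb i = snd (nrm i)"
definition "aa i = cc i \<bullet> v i - bb i"

lemma nrm:
  assumes "i \<le> CARD('n)"
  shows "primitive_vec (cc i)" "\<And>j. j \<le> CARD('n) \<Longrightarrow> j \<noteq> i \<Longrightarrow> cc i \<bullet> v j = bb i" "aa i > 0"
proof -
  from normal_prim[OF assms] have "\<exists>cb. primitive_vec (fst cb) \<and> (\<forall>j\<le>CARD('n). j \<noteq> i \<longrightarrow> fst cb \<bullet> v j = snd cb)
   \<and> fst cb \<bullet> v i > snd cb" by auto
  from someI_ex[OF this] show "primitive_vec (cc i)" "\<And>j. j \<le> CARD('n) \<Longrightarrow> j \<noteq> i \<Longrightarrow> cc i \<bullet> v j = bb i" "aa i > 0"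
    unfolding cc_def bb_def aa_def nrm_def[symmetric] by auto
qed

lemma other: "i \<le> CARD('n) \<Longrightarrow> \<exists>j\<le>CARD('n). j \<noteq> i"
  by (rule exI[of _ "if i = 0 then 1 else 0"]) auto

lemma bb_Ints: assumes "i \<le> CARD('n)" shows "bb i \<in> \<int>"
proof -
  obtain j where "j \<le> CARD('n)" "j \<noteq> i" using other[OF assms] by blast
  thus ?thesis using nrm[OF assms] lat[of j] lattice_inner_Ints unfolding primitive_vec_def by metis
qed

lemma aa_Ints: assumes "i \<le> CARD('n)" shows "aa i \<in> \<int>"
  unfolding aa_def using bb_Ints[OF assms] nrm(1)[OF assms] lat[OF assms] lattice_inner_Ints
  unfolding primitive_vec_def by (metis Ints_diff)

lemma aa_ge1: assumes "i \<le> CARD('n)" shows "aa i \<ge> 1"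
  using aa_Ints[OF assms] nrm(3)[OF assms]
  by (metis Ints_cases int_one_le_iff_zero_less of_int_0_less_iff of_int_1_le_iff)

definition "FF i = convex hull (v ` ({..CARD('n)} - {i}))"
definition "PP = convex hull (v ` {..CARD('n)})"

lemma pin: assumes i: "i \<le> CARD('n)" shows "prim_inner_normal PP (FF i) (cc i) (bb i)"
  unfolding prim_inner_normal_def
proof (intro conjI ballI)
  show "primitive_vec (cc i)" using nrm[OF i] by blast
  have "FF i \<subseteq> {x. cc i \<bullet> x = bb i}" unfolding FF_def
    using nrm(2)[OF i] by (intro hull_minimal) (auto simp: convex_hyperplane)
  thus "x \<in> FF i \<Longrightarrow> cc i \<bullet> x = bb i" for x by auto
  have "PP \<subseteq> {x. cc i \<bullet> x \<ge> bb i}" unfolding PP_def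
    using nrm(2,3)[OF i] unfolding aa_def by (intro hull_minimal) (auto simp: convex_halfspace_ge, 
       metis less_eq_real_def)
  thus "x \<in> PP \<Longrightarrow> cc i \<bullet> x \<ge> bb i" for x by auto
qed

lemma pin_unique:
  assumes i: "i \<le> CARD('n)" and h: "prim_inner_normal PP (FF i) c b"
  shows "c = cc i \<and> b = bb i"
proof -
  have hv: "c \<bullet> v j = b" if "j \<le> CARD('n)" "j \<noteq> i" for j
    using h that unfolding prim_inner_normal_def FF_def by (auto intro!: hull_inc)
  have hi: "c \<bullet> v i \<ge> b" using h i unfolding prim_inner_normal_def PP_def by (auto intro!: hull_inc)
  obtain j0 where j0: "j0 \<le> CARD('n)" "j0 \<noteq> i" using other[OF i] by blast
  have cl: "lattice_point c" "c \<noteq> 0" using h unfolding prim_inner_normal_def primitive_vec_def by auto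
  define m where "m = c \<bullet> v i - b"
  have mI: "m \<in> \<int>" unfolding m_def using hv[OF j0] cl lat i j0 lattice_inner_Ints by (metis Ints_diff)
  define t where "t = m / aa i"
  have a0: "aa i > 0" using nrm(3)[OF i] .
  have "c - t *\<^sub>R cc i = 0"
  proof (rule K)
    fix j assume j: "j \<le> CARD('n)"
    show "(c - t *\<^sub>R cc i) \<bullet> v j = b - t * bb i"
    proof (cases "j = i")
      case True
      have "t * aa i = m" unfolding t_def using a0 by simp
      thus ?thesis using True unfolding m_def aa_def by (simp add: inner_diff_left algebra_simps)
    next
      case False
      thus ?thesis using hv[OF j False] nrm(2)[OF i j False] by (simp add: inner_diff_left)
    qed
  qed
  hence ct: "c = t *\<^sub>R cc i" by simp
  have "m \<ge> 0" using hi m_def by simp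
  moreover have "m \<noteq> 0" using ct cl(2) t_def by auto
  ultimately have m0: "m > 0" by simp
  obtain p where p: "aa i = of_int p" using aa_Ints[OF i] by (metis Ints_cases)
  obtain q where q: "m = of_int q" using mI by (metis Ints_cases)
  have "of_int p *\<^sub>R c = of_int q *\<^sub>R cc i" using ct p q a0 unfolding t_def by simp
  hence "c = cc i" using prim_unique[of c "cc i" p q] h nrm(1)[OF i] p q a0 m0
    unfolding prim_inner_normal_def by auto
  moreover have "b = bb i" using hv[OF j0] nrm(2)[OF i j0] \<open>c = cc i\<close> by simp
  ultimately show ?thesis by simp
qed

lemma facet_dist_FF: assumes i: "i \<le> CARD('n)" shows "facet_dist PP (FF i) y = cc i \<bullet> y - bb i"
  unfolding facet_dist_def
proof (rule the_equality)
  show "\<exists>c b. prim_inner_normal PP (FF i) c b \<and> cc i \<bullet> y - bb i = c \<bullet> y - b"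
    using pin[OF i] by blast
  show "\<And>d. \<exists>c b. prim_inner_normal PP (FF i) c b \<and> d = c \<bullet> y - b \<Longrightarrow> d = cc i \<bullet> y - bb i"
    using pin_unique[OF i] by blast
qed

lemma facets: "F facet_of PP \<longleftrightarrow> (\<exists>i\<le>CARD('n). F = FF i)"
proof -
  have e: "v ` {..CARD('n)} - {v i} = v ` ({..CARD('n)} - {i})" if "i \<le> CARD('n)" for i
    using inj that by (auto simp: inj_on_def)
  have ne: "FF i \<noteq> {}" if "i \<le> CARD('n)" for i
    using other[OF that] unfolding FF_def by auto
  show ?thesis
    unfolding PP_def facet_of_convex_hull_affine_independent[OF indep]
    using e ne unfolding FF_def by (auto simp: PP_def)
qed

lemma poly_dist_eq: "poly_dist PP y = Min ((\<lambda>i. cc i \<bullet> y - bb i) ` {..CARD('n)})"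
proof -
  have "{facet_dist PP F y | F. F facet_of PP} = (\<lambda>i. cc i \<bullet> y - bb i) ` {..CARD('n)}"
    unfolding facets using facet_dist_FF by (auto; metis)
  thus ?thesis unfolding poly_dist_def by simp
qed

lemma level_ne: "inner_level PP s \<noteq> {} \<longleftrightarrow> (\<exists>y. \<forall>i\<le>CARD('n). cc i \<bullet> y - bb i \<ge> s)"
  unfolding inner_level_def poly_dist_eq by (auto simp: Min_ge_iff)

lemma sum_id: "(\<Sum>i\<le>CARD('n). (cc i \<bullet> y - bb i) / aa i) = 1"
proof -
  define d where "d = (\<Sum>i\<le>CARD('n). (1 / aa i) *\<^sub>R cc i)"
  define e where "e = (\<Sum>i\<le>CARD('n). bb i / aa i) + 1"
  have phi: "(\<Sum>i\<le>CARD('n). (cc i \<bullet> x - bb i) / aa i) - 1 = d \<bullet> x - e" for x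
    unfolding d_def e_def by (simp add: inner_sum_left diff_divide_distrib sum_subtractf)
  have vj: "(\<Sum>i\<le>CARD('n). (cc i \<bullet> v j - bb i) / aa i) = 1" if j: "j \<le> CARD('n)" for j
  proof -
    have "(\<Sum>i\<le>CARD('n). (cc i \<bullet> v j - bb i) / aa i) = (\<Sum>i\<le>CARD('n). if i = j then 1 else 0)"
    proof (rule sum.cong)
      fix i assume i: "i \<in> {..CARD('n)}"
      show "(cc i \<bullet> v j - bb i) / aa i = (if i = j then 1 else 0)"
        using nrm[of i] i j unfolding aa_def by auto
    qed simp
    thus ?thesis using j by simp
  qed
  have "d = 0"
  proof (rule K)
    fix j assume "j \<le> CARD('n)"
    thus "d \<bullet> v j = e" using phi[of "v j"] vj[of j] by simp
  qed
  hence "d \<bullet> y - e = d \<bullet> v 0 - e" by simp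
  thus ?thesis using phi[of y] phi[of "v 0"] vj[of 0] by simp
qed

definition "sig = (\<Sum>i\<le>CARD('n). 1 / aa i)"

lemma sig_pos: "sig > 0"
  unfolding sig_def using nrm(3) by (intro sum_pos) auto

lemma mu_eq: "mu PP = sig"
proof -
  have "{s. s > 0 \<and> inner_level PP s \<noteq> {}} = {0<..1/sig}"
  proof (intro set_eqI iffI)
    fix s assume "s \<in> {s. s > 0 \<and> inner_level PP s \<noteq> {}}"
    then obtain y where s: "s > 0" "\<And>i. i \<le> CARD('n) \<Longrightarrow> cc i \<bullet> y - bb i \<ge> s"
      unfolding level_ne by auto
    have "s * sig = (\<Sum>i\<le>CARD('n). s / aa i)" unfolding sig_def by (simp add: sum_distrib_left)
    also have "\<dots> \<le> (\<Sum>i\<le>CARD('n). (cc i \<bullet> y - bb i) / aa i)"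
      using s(2) nrm(3) by (intro sum_mono divide_right_mono) (auto intro: less_imp_le)
    also have "\<dots> = 1" by (rule sum_id)
    finally show "s \<in> {0<..1/sig}" using s(1) sig_pos by (simp add: field_simps)
  next
    fix s assume s: "s \<in> {0<..1/sig}"
    define lam where "lam j = (1 / aa j) / sig" for j
    have "(\<Sum>j\<le>CARD('n). lam j) = (\<Sum>j\<le>CARD('n). 1 / aa j) / sig"
      unfolding lam_def by (rule sum_divide_distrib[symmetric])
    hence lsum: "(\<Sum>j\<le>CARD('n). lam j) = 1" using sig_pos unfolding sig_def by simp
    define y where "y = (\<Sum>j\<le>CARD('n). lam j *\<^sub>R v j)"
    have "cc i \<bullet> y - bb i = 1 / sig" if i: "i \<le> CARD('n)" for i
    proof -
      have "cc i \<bullet> y - bb i = (\<Sum>j\<le>CARD('n). lam j * (cc i \<bullet> v j - bb i))"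
        unfolding y_def using lsum
        by (simp add: inner_sum_right right_diff_distrib sum_subtractf flip: sum_distrib_right)
      also have "\<dots> = (\<Sum>j\<le>CARD('n). if j = i then lam i * aa i else 0)"
        by (rule sum.cong) (use nrm[of i] i in \<open>auto simp: aa_def\<close>)
      also have "\<dots> = 1 / sig" using i nrm(3)[OF i] by (simp add: lam_def)
      finally show ?thesis .
    qed
    thus "s \<in> {s. s > 0 \<and> inner_level PP s \<noteq> {}}" using s unfolding level_ne by (auto intro!: exI[of _ y])
  qed
  thus ?thesis unfolding mu_def using sig_pos by simp
qed

lemma small: assumes "\<forall>i\<le>CARD('n). aa i \<ge> 2"
  shows "sig \<le> (real CARD('n) + 1) / 2 \<and> (sig = (real CARD('n) + 1) / 2 \<longrightarrow> (\<forall>i\<le>CARD('n). aa i = 2))"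
proof -
  have le: "1 / aa i \<le> 1 / 2" if "i \<le> CARD('n)" for i
    using assms that by (auto intro!: divide_left_mono)
  have "sig \<le> (\<Sum>i\<le>CARD('n). 1 / 2)" unfolding sig_def by (rule sum_mono) (use le in auto)
  also have "\<dots> = (real CARD('n) + 1) / 2" by simp
  finally have 1: "sig \<le> (real CARD('n) + 1) / 2" .
  have 2: "\<forall>i\<le>CARD('n). aa i = 2" if eq: "sig = (real CARD('n) + 1) / 2"
  proof (rule ccontr)
    assume "\<not> (\<forall>i\<le>CARD('n). aa i = 2)"
    then obtain j where j: "j \<le> CARD('n)" "aa j \<noteq> 2" by auto
    hence "aa j > 2" using assms by force
    hence "1 / aa j < 1 / 2" by (simp add: frac_less2)
    hence "sig < (\<Sum>i\<le>CARD('n). 1 / 2)" unfolding sig_def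
      using le j by (intro sum_strict_mono_ex1) auto
    thus False using eq by simp
  qed
  show ?thesis using 1 2 by blast
qed

lemma aa_one: assumes "i \<le> CARD('n)" "aa i < 2" shows "aa i = 1"
proof -
  obtain k where k: "aa i = of_int k" using aa_Ints[OF assms(1)] by (metis Ints_cases)
  have "k \<ge> 1" "k < 2" using k aa_ge1[OF assms(1)] assms(2) by auto
  thus ?thesis using k by simp
qed

lemma part1:
  assumes "mu PP > (real CARD('n) + 1) / 2 \<or>
           (mu PP = (real CARD('n) + 1) / 2 \<and> (\<exists>i\<le>CARD('n). facet_dist PP (FF i) (v i) \<noteq> 2))"
  shows "lattice_pyramid PP"
proof -
  have "\<exists>i\<le>CARD('n). aa i < 2"
  proof (rule ccontr)
    assume "\<not> ?thesis"
    hence "\<forall>i\<le>CARD('n). aa i \<ge> 2" by auto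
    from small[OF this] assms show False unfolding mu_eq
      using facet_dist_FF aa_def by force
  qed
  then obtain i where i: "i \<le> CARD('n)" "aa i = 1" using aa_one by blast
  show ?thesis unfolding lattice_pyramid_def
  proof (intro exI conjI)
    show "FF i facet_of PP" using facets i by blast
    show "v i extreme_point_of PP" unfolding PP_def
      using extreme_point_of_convex_hull_affine_independent[OF indep] i by auto
    show "v i \<notin> FF i" using pin[OF i(1)] i unfolding prim_inner_normal_def aa_def by auto
    show "facet_dist PP (FF i) (v i) = 1" using facet_dist_FF[OF i(1)] i unfolding aa_def by simp
  qed
qed

lemma PP_le: "(\<And>j. j \<le> CARD('n) \<Longrightarrow> u \<bullet> v j \<le> M) \<Longrightarrow> x \<in> PP \<Longrightarrow> u \<bullet> x \<le> M"
proof -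
  assume "\<And>j. j \<le> CARD('n) \<Longrightarrow> u \<bullet> v j \<le> M"
  hence "PP \<subseteq> {x. u \<bullet> x \<le> M}" unfolding PP_def by (intro hull_minimal) (auto simp: convex_halfspace_le)
  thus "x \<in> PP \<Longrightarrow> u \<bullet> x \<le> M" by auto
qed

lemma PP_ge: "(\<And>j. j \<le> CARD('n) \<Longrightarrow> u \<bullet> v j \<ge> M) \<Longrightarrow> x \<in> PP \<Longrightarrow> u \<bullet> x \<ge> M"
proof -
  assume "\<And>j. j \<le> CARD('n) \<Longrightarrow> u \<bullet> v j \<ge> M"
  hence "PP \<subseteq> {x. u \<bullet> x \<ge> M}" unfolding PP_def by (intro hull_minimal) (auto simp: convex_halfspace_ge)
  thus "x \<in> PP \<Longrightarrow> u \<bullet> x \<ge> M" by auto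
qed

lemma vPP: "j \<le> CARD('n) \<Longrightarrow> v j \<in> PP" unfolding PP_def by (auto intro: hull_inc)

lemma bdd: "bdd_above ((\<lambda>x. u \<bullet> x) ` PP)" "bdd_below ((\<lambda>x. u \<bullet> x) ` PP)"
proof -
  let ?M = "Max ((\<lambda>j. u \<bullet> v j) ` {..CARD('n)})" and ?m = "Min ((\<lambda>j. u \<bullet> v j) ` {..CARD('n)})"
  show "bdd_above ((\<lambda>x. u \<bullet> x) ` PP)"
    by (rule bdd_aboveI2[of _ _ ?M]) (rule PP_le, auto)
  show "bdd_below ((\<lambda>x. u \<bullet> x) ` PP)"
    by (rule bdd_belowI2[of _ ?m]) (rule PP_ge, auto)
qed

lemma width_ge: assumes "lattice_point u" "u \<noteq> 0"
  shows "(SUP x\<in>PP. u \<bullet> x) - (INF x\<in>PP. u \<bullet> x) \<ge> 1"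
proof -
  obtain j where j: "j \<le> CARD('n)" "u \<bullet> v j \<noteq> u \<bullet> v 0"
    using K[of u "u \<bullet> v 0"] assms(2) by blast
  have "u \<bullet> v j - u \<bullet> v 0 \<in> \<int>" using lattice_inner_Ints assms lat j by (metis Ints_diff le0)
  then obtain k where k: "u \<bullet> v j - u \<bullet> v 0 = of_int k" by (metis Ints_cases)
  hence "k \<noteq> 0" using j by auto
  hence d: "\<bar>u \<bullet> v j - u \<bullet> v 0\<bar> \<ge> 1" using k by linarith
  have "u \<bullet> v a \<le> (SUP x\<in>PP. u \<bullet> x)" "u \<bullet> v a \<ge> (INF x\<in>PP. u \<bullet> x)" if "a \<le> CARD('n)" for a
    using vPP[OF that] bdd by (auto intro: cSUP_upper cINF_lower)
  from this[of j] this[of 0] j d show ?thesis by linarith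
qed

lemma PP_ne: "PP \<noteq> {}" using vPP[of 0] by auto

lemma width_one:
  assumes "lattice_point u" "u \<noteq> 0" "\<And>j. j \<le> CARD('n) \<Longrightarrow> m \<le> u \<bullet> v j \<and> u \<bullet> v j \<le> m + 1"
  shows "lattice_width PP = 1"
proof -
  have "(SUP x\<in>PP. u \<bullet> x) \<le> m + 1" using PP_ne PP_le[where u=u and M="m+1"] assms(3) by (intro cSUP_least) auto
  moreover have "(INF x\<in>PP. u \<bullet> x) \<ge> m" using PP_ne PP_ge[where u=u and M=m] assms(3) by (intro cINF_greatest) auto
  ultimately have w: "(SUP x\<in>PP. u \<bullet> x) - (INF x\<in>PP. u \<bullet> x) \<le> 1" by linarith
  let ?U = "{u. lattice_point u \<and> u \<noteq> (0::real^'n)}"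
  let ?w = "\<lambda>u. (SUP x\<in>PP. u \<bullet> x) - (INF x\<in>PP. u \<bullet> x)"
  have "(INF u\<in>?U. ?w u) \<le> ?w u"
    using assms(1,2) width_ge by (intro cINF_lower) (auto intro: bdd_belowI2[where m=1])
  moreover have "(INF u\<in>?U. ?w u) \<ge> 1"
    using assms(1,2) width_ge by (intro cINF_greatest) auto
  ultimately show ?thesis unfolding lattice_width_def using w by linarith
qed

lemma all2_diff:
  assumes a2: "\<forall>i\<le>CARD('n). aa i = 2" and i: "i \<in> {1..CARD('n)}" and j: "j \<le> CARD('n)"
  shows "cc i \<bullet> v j - cc i \<bullet> v 0 = (if j = i then 2 else 0)"
proof -
  have i': "i \<le> CARD('n)" "0 \<noteq> i" using i by auto
  have "cc i \<bullet> v 0 = bb i" using nrm(2)[OF i'(1) _ ] i' by auto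
  moreover have "cc i \<bullet> v j = (if j = i then bb i + 2 else bb i)"
    using nrm(2)[OF i'(1) j] a2 i' unfolding aa_def by auto
  ultimately show ?thesis by simp
qed

lemma odd_case:
  assumes a2: "\<forall>i\<le>CARD('n). aa i = 2" and j1: "j1 \<le> CARD('n)"
    and odd: "\<forall>z\<in>\<int>. (v j1 - v 0) $ r \<noteq> 2 * z"
  shows "lattice_width PP = 1"
proof -
  define kk where "kk j = \<lfloor>(v j - v 0) $ r\<rfloor>" for j
  have kk: "of_int (kk j) = (v j - v 0) $ r" if "j \<le> CARD('n)" for j
    using lat[OF that] lat[of 0] unfolding kk_def lattice_point_def by simp
  define u where "u = axis r 1 - (\<Sum>i\<in>{1..CARD('n)}. of_int (kk i div 2) *\<^sub>R cc i)"
  have uv: "u \<bullet> v j - u \<bullet> v 0 = of_int (kk j mod 2)" if j: "j \<le> CARD('n)" for j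
  proof (cases "j = 0")
    case True thus ?thesis by (simp add: kk_def)
  next
    case False
    hence j': "j \<in> {1..CARD('n)}" using j by auto
    have "u \<bullet> v j - u \<bullet> v 0 = (v j - v 0) $ r -
        (\<Sum>i\<in>{1..CARD('n)}. of_int (kk i div 2) * (cc i \<bullet> v j - cc i \<bullet> v 0))"
    proof -
      have ux: "u \<bullet> x = x $ r - (\<Sum>i\<in>{1..CARD('n)}. of_int (kk i div 2) * (cc i \<bullet> x))" for x
        by (simp add: u_def inner_diff_left inner_sum_left inner_axis')
      have "(\<Sum>i\<in>{1..CARD('n)}. of_int (kk i div 2) * (cc i \<bullet> v j)) - (\<Sum>i\<in>{1..CARD('n)}. of_int (kk i div 2) * (cc i \<bullet> v 0))
         = (\<Sum>i\<in>{1..CARD('n)}. of_int (kk i div 2) * (cc i \<bullet> v j - cc i \<bullet> v 0))"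
        by (simp add: sum_subtractf[symmetric] right_diff_distrib)
      thus ?thesis using ux[of "v j"] ux[of "v 0"] by simp
    qed
    also have "(\<Sum>i\<in>{1..CARD('n)}. of_int (kk i div 2) * (cc i \<bullet> v j - cc i \<bullet> v 0)) =
        (\<Sum>i\<in>{1..CARD('n)}. if i = j then of_int (kk j div 2) * 2 else 0)"
      by (rule sum.cong) (use all2_diff[OF a2 _ j] in auto)
    also have "\<dots> = of_int (kk j div 2) * 2" using j' by simp
    finally have "u \<bullet> v j - u \<bullet> v 0 = of_int (kk j - kk j div 2 * 2)" using kk[OF j] by simp
    thus ?thesis using minus_div_mult_eq_mod[of "kk j" 2] by simp
  qed
  have lu: "lattice_point u" unfolding u_def
  proof (intro lattice_point_diff lattice_point_sum ballI)
    show "lattice_point (axis r (1::real))" by (auto simp: lattice_point_def axis_def)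
    fix i assume "i \<in> {1..CARD('n)}"
    hence "lattice_point (cc i)" using nrm(1)[of i] unfolding primitive_vec_def by auto
    thus "lattice_point (of_int (kk i div 2) *\<^sub>R cc i)" by (intro lattice_point_scale) auto
  qed
  have j1': "j1 \<noteq> 0"
  proof
    assume "j1 = 0"
    hence "(v j1 - v 0) $ r = 2 * 0" by simp
    thus False using odd Ints_0 by blast
  qed
  have "kk j1 mod 2 \<noteq> 0"
  proof
    assume "kk j1 mod 2 = 0"
    hence "kk j1 = 2 * (kk j1 div 2)" by presburger
    hence "(v j1 - v 0) $ r = 2 * of_int (kk j1 div 2)" using kk[OF j1] by (metis of_int_mult of_int_numeral)
    thus False using odd by auto
  qed
  hence "kk j1 mod 2 = 1" by presburger
  hence "u \<bullet> v j1 - u \<bullet> v 0 = 1" using uv[OF j1] by simp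
  hence "u \<noteq> 0" by auto
  show ?thesis
  proof (rule width_one[OF lu \<open>u \<noteq> 0\<close>, of "u \<bullet> v 0"])
    fix j assume "j \<le> CARD('n)"
    from uv[OF this] have "u \<bullet> v j - u \<bullet> v 0 = of_int (kk j mod 2)" .
    moreover have "kk j mod 2 = 0 \<or> kk j mod 2 = 1" by presburger
    ultimately show "u \<bullet> v 0 \<le> u \<bullet> v j \<and> u \<bullet> v j \<le> u \<bullet> v 0 + 1" by (elim disjE) auto
  qed
qed

lemma even_case:
  assumes a2: "\<forall>i\<le>CARD('n). aa i = 2"
    and ev: "\<forall>j\<le>CARD('n). \<forall>r. \<exists>z\<in>\<int>. (v j - v 0) $ r = 2 * z"
  shows "unimod_equiv PP ((\<lambda>x. 2 *\<^sub>R x) ` std_simplex)"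
proof -
  obtain s :: "nat \<Rightarrow> 'n" where s: "bij_betw s {1..CARD('n)} UNIV"
    using ex_bij_betw_nat_finite_1[of "UNIV :: 'n set"] by auto
  define \<tau> where "\<tau> = inv_into {1..CARD('n)} s"
  have \<tau>1: "\<tau> k \<in> {1..CARD('n)}" for k unfolding \<tau>_def using s
    by (metis bij_betw_def inv_into_into iso_tuple_UNIV_I)
  have \<tau>2: "s (\<tau> k) = k" for k unfolding \<tau>_def using s
    by (meson bij_betw_inv_into_right iso_tuple_UNIV_I)
  have \<tau>3: "\<tau> (s j) = j" if "j \<in> {1..CARD('n)}" for j unfolding \<tau>_def using s that
    by (meson bij_betw_inv_into_left)
  define A :: "real^'n^'n" where "A = (\<chi> k r. cc (\<tau> k) $ r)"
  define t :: "real^'n" where "t = (\<chi> k. - bb (\<tau> k))"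
  define f where "f = (\<lambda>x. A *v x + t)"
  have Ak: "A $ k = cc (\<tau> k)" for k unfolding A_def by (simp add: vec_eq_iff)
  have fx: "f x $ k = cc (\<tau> k) \<bullet> x - bb (\<tau> k)" for x k
    unfolding f_def t_def by (simp add: matrix_vector_mul_component Ak)
  define E :: "real^'n^'n" where "E = (\<chi> r l. (v (\<tau> l) - v 0) $ r / 2)"
  have AE: "A ** E = mat 1"
  proof -
    have "(A ** E) $ k $ l = mat 1 $ k $ l" for k l
    proof -
      have "(A ** E) $ k $ l = (\<Sum>r\<in>UNIV. cc (\<tau> k) $ r * (v (\<tau> l) - v 0) $ r) / 2"
        unfolding matrix_matrix_mult_def A_def E_def by (simp add: sum_divide_distrib)
      also have "\<dots> = (cc (\<tau> k) \<bullet> v (\<tau> l) - cc (\<tau> k) \<bullet> v 0) / 2"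
        by (simp add: inner_vec_def right_diff_distrib sum_subtractf)
      also have "\<dots> = (if \<tau> l = \<tau> k then 1 else 0)"
        using all2_diff[OF a2 \<tau>1[of k], of "\<tau> l"] \<tau>1[of l] by auto
      also have "\<dots> = mat 1 $ k $ l" using \<tau>2 by (auto simp: mat_def) (metis)
      finally show ?thesis .
    qed
    thus ?thesis by (simp add: vec_eq_iff)
  qed
  have Aint: "\<forall>i j. A$i$j \<in> \<int>" unfolding A_def using nrm(1) \<tau>1
    by (auto simp: primitive_vec_def lattice_point_def)
  have Eint: "\<forall>i j. E$i$j \<in> \<int>"
  proof (intro allI)
    fix r l
    obtain z where "z \<in> \<int>" "(v (\<tau> l) - v 0) $ r = 2 * z" using ev \<tau>1[of l] by (meson atLeastAtMost_iff)
    thus "E$r$l \<in> \<int>" unfolding E_def by simp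
  qed
  have "det A * det E = 1" using det_mul[of A E] AE by simp
  moreover obtain a where a: "det A = of_int a" using det_Ints[OF Aint] by (metis Ints_cases)
  moreover obtain e where e: "det E = of_int e" using det_Ints[OF Eint] by (metis Ints_cases)
  ultimately have "of_int (a * e) = (1::real)" by simp
  hence "a * e = 1" by (simp only: of_int_eq_1_iff)
  hence "a = 1 \<or> a = -1" using zmult_eq_1_iff by blast
  hence "\<bar>det A\<bar> = 1" using a by auto
  have um: "unimodular_map f" unfolding unimodular_map_def
    using Aint \<open>\<bar>det A\<bar> = 1\<close> f_def bb_Ints \<tau>1
    by (intro exI[of _ A] exI[of _ t]) (auto simp: t_def lattice_point_def)
  have f0: "f (v 0) = 0"
  proof -
    have "cc (\<tau> k) \<bullet> v 0 = bb (\<tau> k)" for k using nrm(2)[of "\<tau> k" 0] \<tau>1[of k] by auto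
    thus ?thesis by (auto simp: vec_eq_iff fx)
  qed
  have fj: "f (v j) = 2 *\<^sub>R axis (s j) 1" if j: "j \<in> {1..CARD('n)}" for j
  proof -
    have "f (v j) $ k = (2 *\<^sub>R axis (s j) (1::real)) $ k" for k
    proof -
      have "cc (\<tau> k) \<bullet> v 0 = bb (\<tau> k)" using nrm(2)[of "\<tau> k" 0] \<tau>1[of k] by auto
      moreover have "cc (\<tau> k) \<bullet> v j - cc (\<tau> k) \<bullet> v 0 = (if j = \<tau> k then 2 else 0)"
        using all2_diff[OF a2 \<tau>1[of k], of j] j by auto
      moreover have "(j = \<tau> k) \<longleftrightarrow> (k = s j)" using \<tau>2 \<tau>3[OF j] by auto
      ultimately show ?thesis by (auto simp: fx axis_def)
    qed
    thus ?thesis by (simp add: vec_eq_iff)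
  qed
  have img: "f ` v ` {..CARD('n)} = (\<lambda>x. 2 *\<^sub>R x) ` insert 0 {axis i 1 |i. True}"
  proof (intro set_eqI iffI)
    fix y assume "y \<in> f ` v ` {..CARD('n)}"
    then obtain j where j: "j \<le> CARD('n)" "y = f (v j)" by auto
    show "y \<in> (\<lambda>x. 2 *\<^sub>R x) ` insert 0 {axis i 1 |i. True}"
    proof (cases "j = 0")
      case True thus ?thesis using j f0 by auto
    next
      case False
      hence "j \<in> {1..CARD('n)}" using j by auto
      thus ?thesis using j fj by auto
    qed
  next
    fix y :: "real^'n" assume "y \<in> (\<lambda>x. 2 *\<^sub>R x) ` insert 0 {axis i 1 |i. True}"
    then consider "y = 0" | k where "y = 2 *\<^sub>R axis k 1" by auto
    thus "y \<in> f ` v ` {..CARD('n)}"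
    proof cases
      case 1 thus ?thesis using f0 by (auto intro!: image_eqI[of _ _ "v 0"])
    next
      case 2
      have "y = f (v (\<tau> k))" using fj[OF \<tau>1[of k]] \<tau>2 2 by simp
      thus ?thesis using \<tau>1[of k] by auto
    qed
  qed
  have fhull: "f ` (convex hull S) = convex hull (f ` S)" for S
  proof -
    have "f = (\<lambda>x. t + x) \<circ> (\<lambda>x. A *v x)" unfolding f_def by (auto simp: add.commute)
    hence "f ` (convex hull S) = (\<lambda>x. t + x) ` ((\<lambda>x. A *v x) ` (convex hull S))" by (simp add: image_comp)
    also have "\<dots> = convex hull ((\<lambda>x. t + x) ` ((\<lambda>x. A *v x) ` S))"
      by (simp add: convex_hull_linear_image[OF matrix_vector_mul_linear] convex_hull_translation)
    also have "\<dots> = convex hull (f ` S)" unfolding f_def by (simp add: image_comp o_def add.commute)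
    finally show ?thesis .
  qed
  have "f ` PP = (\<lambda>x. 2 *\<^sub>R x) ` std_simplex"
    unfolding PP_def fhull img std_simplex_def convex_hull_scaling ..
  thus ?thesis using um unfolding unimod_equiv_def by blast
qed

lemma part2:
  assumes "mu PP \<ge> (real CARD('n) + 1) / 2" "\<not> unimod_equiv PP ((\<lambda>x. 2 *\<^sub>R x) ` std_simplex)"
  shows "lattice_width PP = 1"
proof (cases "\<exists>i\<le>CARD('n). aa i < 2")
  case True
  then obtain i where i: "i \<le> CARD('n)" "aa i = 1" using aa_one by blast
  show ?thesis
  proof (rule width_one[of "cc i" "bb i"])
    show "lattice_point (cc i)" "cc i \<noteq> 0" using nrm(1)[OF i(1)] unfolding primitive_vec_def by auto
    fix j assume j: "j \<le> CARD('n)"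
    show "bb i \<le> cc i \<bullet> v j \<and> cc i \<bullet> v j \<le> bb i + 1"
      using nrm(2)[OF i(1) j] i unfolding aa_def by (cases "j = i") auto
  qed
next
  case False
  hence ge: "\<forall>i\<le>CARD('n). aa i \<ge> 2" by auto
  from small[OF ge] assms(1) have a2: "\<forall>i\<le>CARD('n). aa i = 2" unfolding mu_eq by auto
  show ?thesis
  proof (cases "\<forall>j\<le>CARD('n). \<forall>r. \<exists>z\<in>\<int>. (v j - v 0) $ r = 2 * z")
    case True
    thus ?thesis using even_case[OF a2] assms(2) by blast
  next
    case False
    then obtain j r where "j \<le> CARD('n)" "\<forall>z\<in>\<int>. (v j - v 0) $ r \<noteq> 2 * z" by blast
    thus ?thesis using odd_case[OF a2] by blast
  qed
qed

end

theorem corollary3p10: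
  fixes v :: "nat \<Rightarrow> real^'n" and P :: "(real^'n) set"
  assumes lat: "\<forall>i\<le>CARD('n). lattice_point (v i)"
    and inj: "inj_on v {..CARD('n)}"
    and indep: "\<not> affine_dependent (v ` {..CARD('n)})"
    and P: "P = convex hull (v ` {..CARD('n)})"
  shows "((mu P > (real CARD('n) + 1) / 2 \<or>
           (mu P = (real CARD('n) + 1) / 2 \<and>
            (\<exists>i\<le>CARD('n). facet_dist P (convex hull (v ` ({..CARD('n)} - {i}))) (v i) \<noteq> 2)))
         \<longrightarrow> lattice_pyramid P) \<and>
         ((mu P \<ge> (real CARD('n) + 1) / 2 \<and> \<not> unimod_equiv P ((\<lambda>x. 2 *\<^sub>R x) ` std_simplex))
         \<longrightarrow> lattice_width P = 1)"
proof -
  interpret lsx v using assms by unfold_locales auto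
  have PP: "P = PP" unfolding P PP_def ..
  show ?thesis unfolding PP using part1 part2 unfolding FF_def by blast
qed

end
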